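(* If $(h,a)$ is a solution of the DKP equations, i.e. $\partial_{t_j}h=\partial_x H^{(j)}$ and $\partial_{t_j}a=a\,(\tilde H^{(j)}-H^{(j)})$ for all $j\ge 1$, then $\tilde h=\sigma(h,a)=h+a_x/a$ is a solution of the KP equations: $\partial_{t_j}\tilde h=\partial_x\tilde H^{(j)}$ for all $j\ge1$. Moreover, assuming the KP currents satisfy $\partial_{t_j}H^{(k)}=\partial_{t_k}H^{(j)}$ along the KP flows, the DKP flows commute pairwise: $[\partial_{t_j},\partial_{t_k}]\,a=0$ (and $[\partial_{t_j},\partial_{t_k}]\,h=0$).
   Context: Let $x$ be a space variable; all coefficients below are functions of $x$, and a subscript $x$ denotes $\partial_x$. Let $M$ be the affine space of formal Laurent series $h(z)=z+\sum_{j\ge1}h_j z^{-j}$, $A$ the affine space of formal Laurent series $a(z)=z+\sum_{j\ge0}a_j z^{-j}$, and $N=M\times A$. The Faà di Bruno iterates of $h$ are $h^{(0)}=1$, $h^{(j+1)}=(\partial_x+h)h^{(j)}=\partial_x h^{(j)}+h\,h^{(j)}$ for $j\ge0$. For $j\ge0$, the KP current $H^{(j)}$ is the unique Laurent series of the form $H^{(j)}=h^{(j)}+\sum_{l=0}^{j-2}p^j_l[h]\,h^{(l)}$, with the $p^j_l[h]$ differential polynomials in the $h_i$ (independent of $z$), such that $H^{(j)}=z^j+O(z^{-1})$ as $z\to\infty$ (e.g. $H^{(0)}=1$, $H^{(1)}=h$, $H^{(2)}=h_x+h^2-2h_1$). The KP equations are $\partial_{t_j}h=\partial_x H^{(j)}$.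 The maps $\mu,\sigma:N\to M$ are $\mu(h,a)=h$ and $\sigma(h,a)=h+a_x/a$. The DKP equations on $N$ are $\partial_{t_j}h=\partial_xH^{(j)}$, $\partial_{t_j}a=a(\tilde H^{(j)}-H^{(j)})$, where $\tilde H^{(j)}$ denotes the current $H^{(j)}$ evaluated at $\tilde h=\sigma(h,a)$. *)

theory Defs
  imports "HOL-Computational_Algebra.Formal_Laurent_Series"
begin

text \<open>Coefficients live in an abstract commutative ring 'r (the ring of
functions of x and the times), equipped with a derivation Dx (the x-derivative) and
derivations Dt j (the t_j-derivatives), each commuting with Dx.  The Dt j are NOT assumed
to commute with each other (commutation of the flows is part of the conclusion).
A formal Laurent series in z with finitely many positive powers of z is represented as an
element of 'r fls in the variable X = z^{-1}; thus the coefficient of z^k of f is f $$ (-k),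
and z itself is fls_X_inv.\<close>

definition zcoeff :: "'r::zero fls \<Rightarrow> int \<Rightarrow> 'r" where
  "zcoeff f k = fls_nth f (- k)"

definition is_derivation :: "('r::comm_ring_1 \<Rightarrow> 'r) \<Rightarrow> bool" where
  "is_derivation D \<longleftrightarrow> (\<forall>u v. D (u + v) = D u + D v) \<and> (\<forall>u v. D (u * v) = u * D v + D u * v)"

definition fls_cmap :: "('r::zero \<Rightarrow> 'r) \<Rightarrow> 'r fls \<Rightarrow> 'r fls" where
  "fls_cmap D f = Abs_fls (\<lambda>n. D (fls_nth f n))"

definition inM :: "'r::comm_ring_1 fls \<Rightarrow> bool" where
  "inM h \<longleftrightarrow> zcoeff h 1 = 1 \<and> (\<forall>k. k \<ge> 0 \<and> k \<noteq> 1 \<longrightarrow> zcoeff h k = 0)"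

definition inA :: "'r::comm_ring_1 fls \<Rightarrow> bool" where
  "inA a \<longleftrightarrow> zcoeff a 1 = 1 \<and> (\<forall>k. k > 1 \<longrightarrow> zcoeff a k = 0)"

primrec fdb :: "('r::comm_ring_1 \<Rightarrow> 'r) \<Rightarrow> 'r fls \<Rightarrow> nat \<Rightarrow> 'r fls" where
  "fdb Dx h 0 = 1"
| "fdb Dx h (Suc j) = fls_cmap Dx (fdb Dx h j) + h * fdb Dx h j"

text \<open>Differential polynomials (with integer coefficients) in the coefficients h_i of h.\<close>
inductive_set dpoly :: "('r::comm_ring_1 \<Rightarrow> 'r) \<Rightarrow> 'r fls \<Rightarrow> 'r set"
  for Dx :: "'r \<Rightarrow> 'r" and h :: "'r fls" where
  gen: "fls_nth h i \<in> dpoly Dx h"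
| one: "1 \<in> dpoly Dx h"
| add: "u \<in> dpoly Dx h \<Longrightarrow> v \<in> dpoly Dx h \<Longrightarrow> u + v \<in> dpoly Dx h"
| neg: "u \<in> dpoly Dx h \<Longrightarrow> - u \<in> dpoly Dx h"
| mult: "u \<in> dpoly Dx h \<Longrightarrow> v \<in> dpoly Dx h \<Longrightarrow> u * v \<in> dpoly Dx h"
| deriv: "u \<in> dpoly Dx h \<Longrightarrow> Dx u \<in> dpoly Dx h"

text \<open>The KP current H^(j): the unique series h^(j) + sum_{l=0}^{j-2} p_l h^(l), with p_l
differential polynomials in the h_i (independent of z), which equals z^j + O(z^{-1}).\<close>
definition kp_current :: "('r::comm_ring_1 \<Rightarrow> 'r) \<Rightarrow> nat \<Rightarrow> 'r fls \<Rightarrow> 'r fls" where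
  "kp_current Dx j h = (THE H. \<exists>p :: nat \<Rightarrow> 'r.
      (\<forall>l < j - 1. p l \<in> dpoly Dx h) \<and>
      H = fdb Dx h j + (\<Sum>l<j - 1. fls_const (p l) * fdb Dx h l) \<and>
      (\<forall>k \<ge> 0. zcoeff H k = (if k = int j then 1 else 0)))"

text \<open>Quotient f / g of Laurent series (used for g with leading coefficient 1).\<close>
definition fls_quot :: "'r::comm_ring_1 fls \<Rightarrow> 'r fls \<Rightarrow> 'r fls" where
  "fls_quot f g = (THE q. g * q = f)"

definition sigma_map :: "('r::comm_ring_1 \<Rightarrow> 'r) \<Rightarrow> 'r fls \<Rightarrow> 'r fls \<Rightarrow> 'r fls" where
  "sigma_map Dx h a = h + fls_quot (fls_cmap Dx a) a"

definition is_KP_solution :: "('r::comm_ring_1 \<Rightarrow> 'r) \<Rightarrow> (nat \<Rightarrow> 'r \<Rightarrow> 'r) \<Rightarrow> 'r fls \<Rightarrow> bool" where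
  "is_KP_solution Dx Dt h \<longleftrightarrow>
     (\<forall>j \<ge> 1. fls_cmap (Dt j) h = fls_cmap Dx (kp_current Dx j h))"

definition is_DKP_solution :: "('r::comm_ring_1 \<Rightarrow> 'r) \<Rightarrow> (nat \<Rightarrow> 'r \<Rightarrow> 'r) \<Rightarrow> 'r fls \<Rightarrow> 'r fls \<Rightarrow> bool" where
  "is_DKP_solution Dx Dt h a \<longleftrightarrow>
     (\<forall>j \<ge> 1. fls_cmap (Dt j) h = fls_cmap Dx (kp_current Dx j h) \<and>
       fls_cmap (Dt j) a = a * (kp_current Dx j (sigma_map Dx h a) - kp_current Dx j h))"

end

theory Submission
  imports Defs
begin
notation fls_nth (infixl "$$" 75)

lemma der_zero: "is_derivation D \<Longrightarrow> D 0 = 0"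
  unfolding is_derivation_def by (metis add_cancel_right_right add_0)

lemma der_one: "is_derivation D \<Longrightarrow> D 1 = 0"
  unfolding is_derivation_def by (metis add_cancel_right_right mult_1 mult_1_right)

lemma der_add: "is_derivation D \<Longrightarrow> D (u + v) = D u + D v"
  unfolding is_derivation_def by blast

lemma der_mult: "is_derivation D \<Longrightarrow> D (u * v) = u * D v + D u * v"
  unfolding is_derivation_def by blast

lemma der_uminus: assumes D: "is_derivation D" shows "D (- u) = - D u"
proof -
  have "D (- u) + D u = D (- u + u)" by (simp only: der_add[OF D])
  also have "\<dots> = 0" by (simp add: der_zero[OF D])
  finally show ?thesis by (simp add: eq_neg_iff_add_eq_0)
qed

lemma der_diff: assumes D: "is_derivation D" shows "D (u - v) = D u - D v"
  by (simp only: der_add[OF D] der_uminus[OF D] diff_conv_add_uminus)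

lemma der_sum: "is_derivation D \<Longrightarrow> D (sum f A) = sum (\<lambda>i. D (f i)) A"
  by (induction A rule: infinite_finite_induct) (simp_all add: der_zero der_add)

lemma cmap_nth: assumes "D 0 = 0" shows "fls_cmap D f $$ n = D (f $$ n)"
  unfolding fls_cmap_def
proof (rule nth_Abs_fls)
    have "\<forall>\<^sub>\<infinity>n. f $$ (- int n) = 0" by simp
  then show "\<forall>\<^sub>\<infinity>n. D (f $$ (- int n)) = 0" by (rule MOST_mono) (simp add: assms)
qed

lemma cmap_nth': "is_derivation D \<Longrightarrow> fls_cmap D f $$ n = D (f $$ n)"
  by (simp add: cmap_nth der_zero)

lemma cmap_add: assumes D: "is_derivation D" shows "fls_cmap D (f + g) = fls_cmap D f + fls_cmap D g"
  by (rule fls_eqI) (simp add: cmap_nth'[OF D] der_add[OF D])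

lemma cmap_diff: assumes D: "is_derivation D" shows "fls_cmap D (f - g) = fls_cmap D f - fls_cmap D g"
  by (rule fls_eqI) (simp add: cmap_nth'[OF D] der_diff[OF D])

lemma cmap_comm:
  assumes "is_derivation D" "is_derivation E" "\<And>u. D (E u) = E (D u)"
  shows "fls_cmap D (fls_cmap E f) = fls_cmap E (fls_cmap D f)"
  by (rule fls_eqI) (simp add: cmap_nth' assms)

lemma times_nth_gen:
  fixes f g :: "'r::comm_ring_1 fls"
  assumes "\<forall>k<m. f$$k = 0" "\<forall>k<m'. g$$k = 0"
  shows "(f*g)$$n = (\<Sum>i=m..n-m'. f$$i * g$$(n-i))"
proof (cases "f = 0 \<or> g = 0")
  case True then show ?thesis by (elim disjE) (simp_all)
next
  case False
  then have f: "f \<noteq> 0" and g: "g \<noteq> 0" by auto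
  have m: "m \<le> fls_subdegree f" using f assms(1) by (intro fls_subdegree_geI) auto
  have m': "m' \<le> fls_subdegree g" using g assms(2) by (intro fls_subdegree_geI) auto
  have "(f*g)$$n = (\<Sum>i=fls_subdegree f..n - fls_subdegree g. f $$ i * g $$ (n - i))"
    by (rule fls_times_nth(2))
  also have "\<dots> = (\<Sum>i=m..n-m'. f$$i * g$$(n-i))"
  proof (rule sum.mono_neutral_left)
    show "{fls_subdegree f..n - fls_subdegree g} \<subseteq> {m..n - m'}" using m m' by auto
    show "\<forall>i\<in>{m..n - m'} - {fls_subdegree f..n - fls_subdegree g}. f $$ i * g $$ (n - i) = 0"
    proof
      fix i assume "i \<in> {m..n - m'} - {fls_subdegree f..n - fls_subdegree g}"
      then have "i < fls_subdegree f \<or> n - i < fls_subdegree g" by auto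
      then show "f $$ i * g $$ (n - i) = 0" by (auto simp: nth_less_subdegree_zero)
    qed
  qed simp
  finally show ?thesis .
qed

lemma cmap_mult:
  fixes f g :: "'r::comm_ring_1 fls"
  assumes D: "is_derivation D"
  shows "fls_cmap D (f * g) = f * fls_cmap D g + fls_cmap D f * g"
proof (rule fls_eqI)
  fix n
  define m where "m = fls_subdegree f"
  define m' where "m' = fls_subdegree g"
  have f0: "\<forall>k<m. f$$k = 0" "\<forall>k<m. fls_cmap D f $$k = 0"
    by (auto simp: m_def nth_less_subdegree_zero cmap_nth'[OF D] der_zero[OF D])
  have g0: "\<forall>k<m'. g$$k = 0" "\<forall>k<m'. fls_cmap D g $$k = 0"
    by (auto simp: m'_def nth_less_subdegree_zero cmap_nth'[OF D] der_zero[OF D])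
  have "fls_cmap D (f*g) $$ n = D (\<Sum>i=m..n-m'. f$$i * g$$(n-i))"
    by (simp only: cmap_nth'[OF D] times_nth_gen[OF f0(1) g0(1)])
  also have "\<dots> = (\<Sum>i=m..n-m'. f$$i * D (g$$(n-i)) + D (f$$i) * g$$(n-i))"
    by (simp only: der_sum[OF D] der_mult[OF D])
  also have "\<dots> = (\<Sum>i=m..n-m'. f$$i * D (g$$(n-i))) + (\<Sum>i=m..n-m'. D (f$$i) * g$$(n-i))"
    by (rule sum.distrib)
  also have "\<dots> = (f * fls_cmap D g)$$n + (fls_cmap D f * g)$$n"
    by (simp only: cmap_nth'[OF D] times_nth_gen[OF f0(1) g0(2)] times_nth_gen[OF f0(2) g0(1)])
  finally show "fls_cmap D (f * g) $$ n = (f * fls_cmap D g + fls_cmap D f * g) $$ n"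
    by simp
qed


lemma a_unit:
  fixes a :: "'r::comm_ring_1 fls"
  assumes aA: "inA a"
  shows "\<exists>ai. a * ai = 1 \<and> (\<forall>k<1. ai $$ k = 0)"
proof -
  define B where "B = Abs_fps (\<lambda>n. a $$ (int n - 1))"
  have a1: "a $$ (-1) = 1"
    using aA unfolding inA_def zcoeff_def by auto
  have a0: "a $$ k = 0" if "k < -1" for k
  proof -
    have "zcoeff a (-k) = 0" using aA that unfolding inA_def by auto
    then show ?thesis by (simp add: zcoeff_def)
  qed
  have aB: "a = fls_shift 1 (fps_to_fls B)"
  proof (rule fls_eqI)
    fix n
    show "a $$ n = fls_shift 1 (fps_to_fls B) $$ n"
      by (cases "n < -1") (auto simp: B_def a0)
  qed
  have B0: "B $ 0 * 1 = 1" using a1 by (simp add: B_def)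
  define Bi where "Bi = fps_right_inverse B 1"
  have BBi: "B * Bi = 1" unfolding Bi_def by (rule fps_right_inverse[OF B0])
  define ai where "ai = fls_shift (-1) (fps_to_fls Bi)"
  have "a * ai = fls_shift (1 + -1) (fps_to_fls B * fps_to_fls Bi)"
    unfolding aB ai_def by (rule fls_times_both_shifted_simp)
  also have "\<dots> = 1" by (simp add: fls_times_fps_to_fls[symmetric] BBi)
  finally have "a * ai = 1" .
  moreover have "\<forall>k<1. ai $$ k = 0" by (simp add: ai_def)
  ultimately show ?thesis by blast
qed

lemma quot_eq:
  fixes a ai f :: "'r::comm_ring_1 fls"
  assumes "a * ai = 1"
  shows "fls_quot f a = ai * f"
  unfolding fls_quot_def
proof (rule the_equality)
  show "a * (ai * f) = f" by (simp add: mult.assoc[symmetric] assms)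
next
  fix q assume "a * q = f"
  then have "ai * (a * q) = ai * f" by simp
  then show "q = ai * f" by (simp add: mult.assoc[symmetric] mult.commute[of ai a] assms)
qed


theorem mainTheorem1:
  fixes Dx :: "'r::comm_ring_1 \<Rightarrow> 'r" and Dt :: "nat \<Rightarrow> 'r \<Rightarrow> 'r"
    and h a :: "'r fls"
  assumes Dx_der: "is_derivation Dx"
    and Dt_der: "\<And>j. is_derivation (Dt j)"
    and Dt_Dx_comm: "\<And>j u. Dt j (Dx u) = Dx (Dt j u)"
    and hM: "inM h" and aA: "inA a"
    and DKP: "is_DKP_solution Dx Dt h a"
  shows "is_KP_solution Dx Dt (sigma_map Dx h a)
    \<and> ((\<forall>g. inM g \<longrightarrow> is_KP_solution Dx Dt g \<longrightarrow>
           (\<forall>j\<ge>1. \<forall>k\<ge>1. fls_cmap (Dt j) (kp_current Dx k g) = fls_cmap (Dt k) (kp_current Dx j g)))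
       \<longrightarrow> (\<forall>j\<ge>1. \<forall>k\<ge>1. \<forall>n.
              Dt j (Dt k (fls_nth a n)) = Dt k (Dt j (fls_nth a n))
            \<and> Dt j (Dt k (fls_nth h n)) = Dt k (Dt j (fls_nth h n))))"
proof -
  obtain ai where ai: "a * ai = 1" "\<forall>k<1. ai $$ k = 0" using a_unit[OF aA] by blast
  define Ax where "Ax = fls_cmap Dx a"
  define q where "q = ai * Ax"
  have th: "sigma_map Dx h a = h + q"
    unfolding sigma_map_def q_def Ax_def using quot_eq[OF ai(1)] by simp
  have aq: "a * q = Ax" unfolding q_def by (simp add: mult.assoc[symmetric] ai(1))
  have cancel: "x = 0" if "a * x = 0" for x
  proof -
    have "ai * (a * x) = 0" using that by simp
    then show ?thesis by (simp add: mult.assoc[symmetric] mult.commute[of ai a] ai(1))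
  qed
  have Ax0: "\<forall>k<0. Ax $$ k = 0"
  proof (intro allI impI)
    fix k :: int assume "k < 0"
    show "Ax $$ k = 0"
    proof (cases "k = -1")
      case True
      then have "a $$ k = 1" using aA by (simp add: inA_def zcoeff_def)
      then show ?thesis by (simp add: Ax_def cmap_nth'[OF Dx_der] der_one[OF Dx_der])
    next
      case False
      with \<open>k<0\<close> have "k < -1" by simp
      then have "zcoeff a (-k) = 0" using aA unfolding inA_def by auto
      then have "a $$ k = 0" by (simp add: zcoeff_def)
      then show ?thesis by (simp add: Ax_def cmap_nth'[OF Dx_der] der_zero[OF Dx_der])
    qed
  qed
  have q0: "q $$ k = 0" if "k \<le> 0" for k
    unfolding q_def times_nth_gen[OF ai(2) Ax0] using that by simp
  have thM: "inM (h + q)"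
    using hM q0 unfolding inM_def zcoeff_def by auto
  define K where "K = (\<lambda>j g. kp_current Dx j g)"
  define r where "r = (\<lambda>j. K j (h + q) - K j h)"
  have Eh: "fls_cmap (Dt j) h = fls_cmap Dx (K j h)" if "j \<ge> 1" for j
    using DKP that unfolding is_DKP_solution_def K_def by blast
  have Ea: "fls_cmap (Dt j) a = a * r j" if "j \<ge> 1" for j
    using DKP that unfolding is_DKP_solution_def K_def r_def th[symmetric] by blast
  have KPth: "fls_cmap (Dt j) (h + q) = fls_cmap Dx (K j (h + q))" if j: "j \<ge> 1" for j
  proof -
    have "a * fls_cmap (Dt j) q = fls_cmap (Dt j) (a * q) - fls_cmap (Dt j) a * q"
      by (simp add: cmap_mult[OF Dt_der])
    also have "\<dots> = fls_cmap (Dt j) (fls_cmap Dx a) - a * r j * q"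
      by (simp only: aq Ax_def Ea[OF j])
    finally have 1: "a * fls_cmap (Dt j) q = fls_cmap (Dt j) (fls_cmap Dx a) - a * r j * q" .
    have "a * fls_cmap Dx (r j) = fls_cmap Dx (a * r j) - fls_cmap Dx a * r j"
      by (simp add: cmap_mult[OF Dx_der])
    also have "\<dots> = fls_cmap Dx (fls_cmap (Dt j) a) - a * q * r j"
      by (simp only: aq Ax_def Ea[OF j])
    finally have 2: "a * fls_cmap Dx (r j) = fls_cmap Dx (fls_cmap (Dt j) a) - a * q * r j" .
    have cm: "fls_cmap (Dt j) (fls_cmap Dx a) = fls_cmap Dx (fls_cmap (Dt j) a)"
      by (rule cmap_comm[of "Dt j" Dx, OF Dt_der Dx_der Dt_Dx_comm])
    have "a * (fls_cmap (Dt j) q - fls_cmap Dx (r j)) = a * fls_cmap (Dt j) q - a * fls_cmap Dx (r j)"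
      by (rule right_diff_distrib)
    also have "\<dots> = (fls_cmap Dx (fls_cmap (Dt j) a) - a * r j * q) - (fls_cmap Dx (fls_cmap (Dt j) a) - a * q * r j)"
      using 1 2 cm by simp
    also have "\<dots> = 0" by (simp add: ac_simps)
    finally have "a * (fls_cmap (Dt j) q - fls_cmap Dx (r j)) = 0" .
    then have "fls_cmap (Dt j) q - fls_cmap Dx (r j) = 0" by (rule cancel)
    then have 3: "fls_cmap (Dt j) q = fls_cmap Dx (r j)" by simp
    have "fls_cmap (Dt j) (h + q) = fls_cmap Dx (K j h) + fls_cmap Dx (r j)"
      by (simp add: cmap_add[OF Dt_der] Eh[OF j] 3)
    also have "\<dots> = fls_cmap Dx (K j h + r j)" by (simp add: cmap_add[OF Dx_der])
    also have "K j h + r j = K j (h + q)" by (simp add: r_def)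
    finally show ?thesis .
  qed
  have KP1: "is_KP_solution Dx Dt (sigma_map Dx h a)"
    unfolding th is_KP_solution_def using KPth unfolding K_def by blast
  have KPh: "is_KP_solution Dx Dt h"
    unfolding is_KP_solution_def using Eh unfolding K_def by blast
  show ?thesis
  proof (intro conjI impI allI)
    show "is_KP_solution Dx Dt (sigma_map Dx h a)" by (rule KP1)
  next
    fix j k :: nat and n :: int
    assume P: "\<forall>g. inM g \<longrightarrow> is_KP_solution Dx Dt g \<longrightarrow>
           (\<forall>j\<ge>1. \<forall>k\<ge>1. fls_cmap (Dt j) (kp_current Dx k g) = fls_cmap (Dt k) (kp_current Dx j g))"
      and j: "1 \<le> j" and k: "1 \<le> k"
    have Ph: "fls_cmap (Dt j') (K k' h) = fls_cmap (Dt k') (K j' h)" if "j' \<ge> 1" "k' \<ge> 1" for j' k'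
      using P hM KPh that unfolding K_def by blast
    have Pth: "fls_cmap (Dt j') (K k' (h+q)) = fls_cmap (Dt k') (K j' (h+q))" if "j' \<ge> 1" "k' \<ge> 1" for j' k'
      using P thM KP1 that unfolding K_def th by blast
    have Pr: "fls_cmap (Dt j') (r k') = fls_cmap (Dt k') (r j')" if "j' \<ge> 1" "k' \<ge> 1" for j' k'
      using Ph[OF that] Pth[OF that] by (simp add: r_def cmap_diff[OF Dt_der])
    have aa: "fls_cmap (Dt j') (fls_cmap (Dt k') a) = a * fls_cmap (Dt j') (r k') + a * r j' * r k'"
      if "j' \<ge> 1" "k' \<ge> 1" for j' k'
      by (simp add: Ea[OF that(2)] Ea[OF that(1)] cmap_mult[OF Dt_der])
    have hh: "fls_cmap (Dt j') (fls_cmap (Dt k') h) = fls_cmap Dx (fls_cmap (Dt j') (K k' h))"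
      if "j' \<ge> 1" "k' \<ge> 1" for j' k'
      by (simp only: Eh[OF that(2)] cmap_comm[of "Dt j'" Dx, OF Dt_der Dx_der Dt_Dx_comm])
    have rr: "a * r j * r k = a * r k * r j" by (simp add: ac_simps)
    have A: "fls_cmap (Dt j) (fls_cmap (Dt k) a) = fls_cmap (Dt k) (fls_cmap (Dt j) a)"
      using aa[OF j k] aa[OF k j] Pr[OF j k] rr by simp
    have H: "fls_cmap (Dt j) (fls_cmap (Dt k) h) = fls_cmap (Dt k) (fls_cmap (Dt j) h)"
      using hh[OF j k] hh[OF k j] Ph[OF j k] by simp
    show "Dt j (Dt k (a $$ n)) = Dt k (Dt j (a $$ n))"
      using arg_cong[OF A, of "\<lambda>f. f $$ n"] by (simp add: cmap_nth'[OF Dt_der])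
    show "Dt j (Dt k (h $$ n)) = Dt k (Dt j (h $$ n))"
      using arg_cong[OF H, of "\<lambda>f. f $$ n"] by (simp add: cmap_nth'[OF Dt_der])
  qed
qed

end
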